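(* Let $R$ be a commutative ring and let $R(S_\infty)$ be the set of all functions $S_\infty\to R$, with product $$(fg)(w)=\sum_{u\cdot v=w}(-1)^{\ell(u)+\ell(v)-\ell(w)}f(u)g(v),$$ the sum over pairs $(u,v)$ whose product in the degenerate Hecke algebra is $w$; let $\underline 1$ be the characteristic function of the identity permutation. Let $f,g,h\in R(S_\infty)$, and assume that for every $w\in S_\infty$ the element $\sum_{u:\,u\cdot w=w}(-1)^{\ell(u)}f(u)$ is not a zero divisor in $R$. Then (i) if $fg=f$ then $g=\underline 1$; (ii) if $fh=\underline 1$ then $hf=\underline 1$.
   Context: $S_\infty=\bigcup_nS_n$. Degenerate Hecke algebra: the $\mathbb Z$-algebra generated by $s_1,s_2,\dots$ with $s_i^2=s_i$, $s_is_j=s_js_i$ for $|i-j|>1$, $s_is_{i+1}s_i=s_{i+1}s_is_{i+1}$; each permutation is identified with the product of generators along one of its reduced words, and these products are again permutations, so the sums above are finite. $\ell$ denotes Coxeter length. This product on $R(S_\infty)$ is associative with identity $\underline 1$. *)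

theory Defs
  imports "HOL-Combinatorics.Perm"
begin

text \<open>S_infinity: finitary permutations of the positive integers, modelled as
  finitely supported permutations of nat (index 0 playing the role of 1).\<close>

type_synonym sinf = "nat perm"

definition sgen :: "nat \<Rightarrow> sinf" where
  "sgen i = Perm.swap i (Suc i)"

definition len :: "sinf \<Rightarrow> nat" where
  "len w = card {(i, j). i < j \<and> Perm.apply w j < Perm.apply w i}"

definition word_prod :: "nat list \<Rightarrow> sinf" where
  "word_prod is = foldr (\<lambda>i p. sgen i * p) is 1"

definition reduced_word :: "nat list \<Rightarrow> sinf \<Rightarrow> bool" where
  "reduced_word is w \<longleftrightarrow> word_prod is = w \<and> length is = len w"

text \<open>Right multiplication by a generator in the degenerate Hecke algebra
  (s_i^2 = s_i): u . s_i = u s_i if the length goes up, u otherwise.\<close>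
definition hgen :: "sinf \<Rightarrow> nat \<Rightarrow> sinf" where
  "hgen u i = (if len u < len (u * sgen i) then u * sgen i else u)"

definition hprod :: "sinf \<Rightarrow> sinf \<Rightarrow> sinf" where
  "hprod u v = foldl hgen u (SOME is. reduced_word is v)"

definition rmul :: "(sinf \<Rightarrow> 'r::comm_ring_1) \<Rightarrow> (sinf \<Rightarrow> 'r) \<Rightarrow> (sinf \<Rightarrow> 'r)" where
  "rmul f g w = (\<Sum>(u, v) \<in> {(u, v). hprod u v = w}.
      (-1) ^ (len u + len v - len w) * f u * g v)"

definition runit :: "sinf \<Rightarrow> 'r::comm_ring_1" where
  "runit w = (if w = 1 then 1 else 0)"

definition non_zero_divisor :: "'r::comm_ring_1 \<Rightarrow> bool" where
  "non_zero_divisor c \<longleftrightarrow> (\<forall>x. c * x = 0 \<longrightarrow> x = 0)"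

end

theory Submission
  imports Defs "HOL-Library.FuncSet"
begin

notation Perm.apply (infixl "$$" 999)

lemma sgen_apply: "sgen i $$ a = transpose i (Suc i) a"
  unfolding sgen_def by transfer simp

lemma perm_bound: "\<exists>N. \<forall>a\<ge>N. (w::sinf) $$ a = a"
proof -
  obtain N where "\<forall>n\<in>affected w. n < N" using finite_nat_set_iff_bounded finite_affected by blast
  then have "\<forall>a\<ge>N. w $$ a = a" using in_affected by (metis not_le)
  then show ?thesis by blast
qed

lemma perm_bound_lt:
  fixes w :: sinf
  assumes "\<forall>a\<ge>N. w $$ a = a" "a < N" shows "w $$ a < N"
proof (rule ccontr)
  assume "\<not> w $$ a < N"
  then have "N \<le> w $$ a" by linarith
  then have "w $$ (w $$ a) = w $$ a" using assms(1) by blast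
  then have "w $$ a = a" by (simp add: apply_inj)
  with \<open>\<not> w $$ a < N\<close> assms show False by simp
qed

definition invs :: "sinf \<Rightarrow> (nat \<times> nat) set" where
  "invs w = {(i, j). i < j \<and> w $$ j < w $$ i}"

lemma len_invs: "len w = card (invs w)" unfolding len_def invs_def by simp

lemma finite_invs: "finite (invs w)"
proof -
  obtain N where N: "\<forall>a\<ge>N. w $$ a = a" using perm_bound by blast
  have "invs w \<subseteq> {..<N} \<times> {..<N}"
  proof
    fix p assume p: "p \<in> invs w"
    obtain i j where ij: "p = (i, j)" "i < j" "w $$ j < w $$ i" using p unfolding invs_def by auto
    have "j < N"
    proof (rule ccontr)
      assume "\<not> j < N"
      then have "w $$ j = j" using N by auto
      show False
      proof (cases "i < N")
        case True then have "w $$ i < N" using perm_bound_lt N by blast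
        then show False using ij \<open>w $$ j = j\<close> \<open>\<not> j < N\<close> by linarith
      next
        case False then have "w $$ i = i" using N by auto
        then show False using ij \<open>w $$ j = j\<close> by linarith
      qed
    qed
    then show "p \<in> {..<N} \<times> {..<N}" using ij by auto
  qed
  then show ?thesis by (rule finite_subset) auto
qed

lemma transpose_mono:
  assumes "a < b" "(a, b) \<noteq> (i, Suc i)"
  shows "transpose i (Suc i) a < transpose i (Suc i) b"
  using assms by (auto simp: transpose_def)

lemma invs_swap_bij:
  "bij_betw (\<lambda>(a,b). (transpose i (Suc i) a, transpose i (Suc i) b))
     (invs (w * sgen i) - {(i, Suc i)}) (invs w - {(i, Suc i)})"
proof (rule bij_betw_byWitness[where f' = "\<lambda>(a,b). (transpose i (Suc i) a, transpose i (Suc i) b)"], goal_cases)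
  case 1
  then show ?case by (auto simp: transpose_involutory)
next
  case 2
  then show ?case by (auto simp: transpose_involutory)
next
  case 3
  show ?case
  proof
    fix q assume "q \<in> (\<lambda>(a,b). (transpose i (Suc i) a, transpose i (Suc i) b)) ` (invs (w * sgen i) - {(i, Suc i)})"
    then obtain a b where q: "q = (transpose i (Suc i) a, transpose i (Suc i) b)" and ab: "(a, b) \<in> invs (w * sgen i) - {(i, Suc i)}" by auto
    from ab have  "a < b" "w $$ (transpose i (Suc i) b) < w $$ (transpose i (Suc i) a)"
      by (auto simp: invs_def apply_times sgen_apply)
    moreover have "transpose i (Suc i) a < transpose i (Suc i) b"
      using ab \<open>a < b\<close> by (intro transpose_mono) auto
    moreover have "(transpose i (Suc i) a, transpose i (Suc i) b) \<noteq> (i, Suc i)"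
      using \<open>a < b\<close> by (auto simp: transpose_def split: if_splits)
    ultimately show "q \<in> invs w - {(i, Suc i)}"
      using q by (simp add: invs_def)
  qed
next
  case 4
  show ?case
  proof
    fix q assume "q \<in> (\<lambda>(a,b). (transpose i (Suc i) a, transpose i (Suc i) b)) ` (invs w - {(i, Suc i)})"
    then obtain a b where q: "q = (transpose i (Suc i) a, transpose i (Suc i) b)" and ab: "(a, b) \<in> invs w - {(i, Suc i)}" by auto
    from ab have  "a < b" "w $$ b < w $$ a"
      by (auto simp: invs_def)
    moreover have "transpose i (Suc i) a < transpose i (Suc i) b"
      using ab \<open>a < b\<close> by (intro transpose_mono) auto
    moreover have "(transpose i (Suc i) a, transpose i (Suc i) b) \<noteq> (i, Suc i)"
      using \<open>a < b\<close> by (auto simp: transpose_def split: if_splits)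
    ultimately show "q \<in> invs (w * sgen i) - {(i, Suc i)}"
      using q by (simp add: invs_def apply_times sgen_apply transpose_involutory)
  qed
qed
lemma card_minus_pair: "finite A \<Longrightarrow> card A = card (A - {p}) + (if p \<in> A then 1 else 0)"
  using card.remove[of A p] by (cases "p \<in> A") auto

lemma len_swap_up:
  assumes "w $$ i < w $$ (Suc i)"
  shows "len (w * sgen i) = Suc (len w)"
proof -
  have c: "card (invs (w * sgen i) - {(i, Suc i)}) = card (invs w - {(i, Suc i)})"
    using bij_betw_same_card[OF invs_swap_bij] .
  have "(i, Suc i) \<in> invs (w * sgen i)" using assms by (simp add: invs_def apply_times sgen_apply)
  moreover have "(i, Suc i) \<notin> invs w" using assms by (simp add: invs_def)
  moreover note card_minus_pair[OF finite_invs, of "w * sgen i" "(i, Suc i)"] card_minus_pair[OF finite_invs, of w "(i, Suc i)"]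
  ultimately show ?thesis unfolding len_invs using c
    by (simp only: if_True if_False)
qed

lemma len_swap_down:
  assumes "w $$ (Suc i) < w $$ i"
  shows "len w = Suc (len (w * sgen i))"
proof -
  have c: "card (invs (w * sgen i) - {(i, Suc i)}) = card (invs w - {(i, Suc i)})"
    using bij_betw_same_card[OF invs_swap_bij] .
  have "(i, Suc i) \<notin> invs (w * sgen i)" using assms by (simp add: invs_def apply_times sgen_apply)
  moreover have "(i, Suc i) \<in> invs w" using assms by (simp add: invs_def)
  moreover note card_minus_pair[OF finite_invs, of "w * sgen i" "(i, Suc i)"] card_minus_pair[OF finite_invs, of w "(i, Suc i)"]
  ultimately show ?thesis unfolding len_invs using c
    by (simp only: if_True if_False)
qed

lemma len_swap_le: "len (w * sgen i) \<le> Suc (len w)"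
proof -
  have "w $$ i \<noteq> w $$ (Suc i)" by (simp add: apply_inj)
  then show ?thesis using len_swap_up[of w i] len_swap_down[of w i] by linarith
qed

lemma hgen_iff: "len u < len (u * sgen i) \<longleftrightarrow> u $$ i < u $$ (Suc i)"
proof -
  have "u $$ i \<noteq> u $$ (Suc i)" by (simp add: apply_inj)
  then show ?thesis using len_swap_up[of u i] len_swap_down[of u i] by linarith
qed

lemma len_one: "len 1 = 0"
proof -
  have "{(i, j). i < j \<and> j < (i::nat)} = {}" by auto
  then show ?thesis unfolding len_def by (simp only: apply_one id_apply card.empty)
qed



lemma no_descent_id:
  assumes "\<forall>i. w $$ i < w $$ (Suc i)"
  shows "w = 1"
proof -
  have sm: "strict_mono (Perm.apply w)" using assms strict_mono_Suc_iff by blast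
  have surj: "\<And>x. w $$ (inv (Perm.apply w) x) = x"
    by (simp add: bij_is_surj surj_f_inv_f)
  have smi: "strict_mono (inv (Perm.apply w))"
  proof (rule strict_monoI)
    fix x y :: nat assume "x < y"
    show "inv (Perm.apply w) x < inv (Perm.apply w) y"
    proof (rule ccontr)
      assume "\<not> ?thesis"
      then have "inv (Perm.apply w) y \<le> inv (Perm.apply w) x" by linarith
      then have "w $$ (inv (Perm.apply w) y) \<le> w $$ (inv (Perm.apply w) x)"
        using sm strict_mono_less_eq by blast
      then show False using surj \<open>x < y\<close> by simp
    qed
  qed
  show ?thesis
  proof (rule perm_eqI)
    fix a
    have "a \<le> w $$ a" using strict_mono_imp_increasing[OF sm] .
    moreover have "w $$ a \<le> inv (Perm.apply w) (w $$ a)" using strict_mono_imp_increasing[OF smi] .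
    moreover have "inv (Perm.apply w) (w $$ a) = a" by (simp add: bij_is_inj)
    ultimately show "w $$ a = 1 $$ a" by simp
  qed
qed

lemma word_prod_append: "word_prod (xs @ ys) = word_prod xs * word_prod ys"
  unfolding word_prod_def by (induction xs) (simp_all add: mult.assoc)

lemma word_prod_snoc: "word_prod (xs @ [i]) = word_prod xs * sgen i"
  by (simp only: word_prod_append) (simp add: word_prod_def)

lemma sgen_sq: "sgen i * sgen i = 1"
  by (rule perm_eqI) (simp add: apply_times sgen_apply)

lemma reduced_exists: "\<exists>is. reduced_word is w"
proof (induction "len w" arbitrary: w rule: less_induct)
  case less
  show ?case
  proof (cases "\<forall>i. w $$ i < w $$ (Suc i)")
    case True
    then have "w = 1" by (rule no_descent_id)
    then have "reduced_word [] w" by (simp add: reduced_word_def word_prod_def len_one)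
    then show ?thesis by blast
  next
    case False
    then obtain i where "\<not> w $$ i < w $$ (Suc i)" by blast
    moreover have "w $$ i \<noteq> w $$ (Suc i)" by (simp add: apply_inj)
    ultimately have "w $$ (Suc i) < w $$ i" by linarith
    then have l: "len w = Suc (len (w * sgen i))" by (rule len_swap_down)
    then obtain js where js: "reduced_word js (w * sgen i)" using less by (metis lessI)
    have "word_prod (js @ [i]) = w"
      using js by (simp add: reduced_word_def word_prod_snoc mult.assoc sgen_sq)
    moreover have "length (js @ [i]) = len w" using js l by (simp add: reduced_word_def)
    ultimately show ?thesis unfolding reduced_word_def by blast
  qed
qed

definition tm :: "(nat \<Rightarrow> nat \<Rightarrow> nat) \<Rightarrow> (nat \<Rightarrow> nat \<Rightarrow> nat) \<Rightarrow> nat \<Rightarrow> nat \<Rightarrow> nat" where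
  "tm A B i k = (LEAST x. \<exists>j. x = A i j + B j k)"

lemma tm_le: "tm A B i k \<le> A i j + B j k"
  unfolding tm_def by (rule Least_le) blast

lemma tm_ex: "\<exists>j. tm A B i k = A i j + B j k"
  unfolding tm_def by (rule LeastI_ex) blast

lemma tm_assoc: "tm (tm A B) C = tm A (tm B C)"
proof (intro ext antisym)
  fix i k
  obtain j where j: "tm (tm A B) C i k = tm A B i j + C j k" using tm_ex by blast
  obtain l where l: "tm A B i j = A i l + B l j" using tm_ex by blast
  have "tm A (tm B C) i k \<le> A i l + tm B C l k" by (rule tm_le)
  also have "\<dots> \<le> A i l + (B l j + C j k)" using tm_le by simp
  finally show "tm A (tm B C) i k \<le> tm (tm A B) C i k" using j l by simp
next
  fix i k
  obtain l where l: "tm A (tm B C) i k = A i l + tm B C l k" using tm_ex by blast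
  obtain j where j: "tm B C l k = B l j + C j k" using tm_ex by blast
  have "tm (tm A B) C i k \<le> tm A B i j + C j k" by (rule tm_le)
  also have "\<dots> \<le> (A i l + B l j) + C j k" using tm_le by simp
  finally show "tm (tm A B) C i k \<le> tm A (tm B C) i k" using j l by simp
qed

definition R :: "sinf \<Rightarrow> nat \<Rightarrow> nat \<Rightarrow> nat" where
  "R w i k = card {a. a < i \<and> k \<le> w $$ a}"

lemma R_0: "R w 0 k = 0" unfolding R_def by simp

lemma R_Suc: "R w (Suc i) k = R w i k + (if k \<le> w $$ i then 1 else 0)"
proof -
  have "{a. a < Suc i \<and> k \<le> w $$ a} = (if k \<le> w $$ i then insert i {a. a < i \<and> k \<le> w $$ a} else {a. a < i \<and> k \<le> w $$ a})"
    by (auto simp: less_Suc_eq)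
  then show ?thesis unfolding R_def by simp
qed

lemma R_mono_i: "i \<le> j \<Longrightarrow> R w i k \<le> R w j k"
  unfolding R_def by (rule card_mono) auto

lemma R_anti_k: "k \<le> l \<Longrightarrow> R w i l \<le> R w i k"
  unfolding R_def by (rule card_mono) auto

lemma Ri_le: "R u i k \<le> (i - j) + R u j k"
proof -
  have "{a. a < i \<and> k \<le> u $$ a} \<subseteq> {j..<i} \<union> {a. a < j \<and> k \<le> u $$ a}" by auto
  then have "R u i k \<le> card ({j..<i} \<union> {a. a < j \<and> k \<le> u $$ a})"
    unfolding R_def by (rule card_mono[rotated]) auto
  also have "\<dots> \<le> card {j..<i} + card {a. a < j \<and> k \<le> u $$ a}" by (rule card_Un_le)
  finally show ?thesis unfolding R_def by simp
qed

lemma card_inj_range: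
  assumes "\<forall>a\<in>A. w $$ a \<in> B" "finite B"
  shows "card A \<le> card B"
proof -
  have "inj_on (Perm.apply w) A" by (simp add: apply_inj inj_on_def)
  moreover have "Perm.apply w ` A \<subseteq> B" using assms by auto
  ultimately show ?thesis using assms(2) by (metis card_inj_on_le)
qed

lemma Rk_le: "R v i k \<le> R v i j + (j - k)"
proof -
  have "{a. a < i \<and> k \<le> v $$ a} \<subseteq> {a. a < i \<and> j \<le> v $$ a} \<union> {a. a < i \<and> k \<le> v $$ a \<and> v $$ a < j}" by auto
  then have "R v i k \<le> card ({a. a < i \<and> j \<le> v $$ a} \<union> {a. a < i \<and> k \<le> v $$ a \<and> v $$ a < j})"
    unfolding R_def by (rule card_mono[rotated]) auto
  also have "\<dots> \<le> card {a. a < i \<and> j \<le> v $$ a} + card {a. a < i \<and> k \<le> v $$ a \<and> v $$ a < j}" by (rule card_Un_le)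
  also have "card {a. a < i \<and> k \<le> v $$ a \<and> v $$ a < j} \<le> card {k..<j}"
    by (rule card_inj_range) auto
  finally show ?thesis unfolding R_def by simp
qed

lemma R_lower: "j - k \<le> R u j k"
proof -
  have "{..<j} = {a. a < j \<and> k \<le> u $$ a} \<union> {a. a < j \<and> u $$ a < k}" by auto
  then have "j \<le> card {a. a < j \<and> k \<le> u $$ a} + card {a. a < j \<and> u $$ a < k}"
    by (metis card_Un_le card_lessThan)
  also have "card {a. a < j \<and> u $$ a < k} \<le> card {..<k}" by (rule card_inj_range) auto
  finally show ?thesis unfolding R_def by simp
qed

lemma R_one: "R 1 i j = i - j"
proof -
  have "{a. a < i \<and> j \<le> 1 $$ a} = {j..<i}" by auto
  then show ?thesis unfolding R_def by simp
qed

lemma tm_one_left: "tm (R 1) (R u) = R u"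
proof (intro ext antisym)
  fix i k
  show "tm (R 1) (R u) i k \<le> R u i k" using tm_le[of "R 1" "R u" i k i] by (simp add: R_one)
  obtain j where "tm (R 1) (R u) i k = R 1 i j + R u j k" using tm_ex by blast
  then show "R u i k \<le> tm (R 1) (R u) i k" using Ri_le[of u i k j] by (simp add: R_one)
qed

lemma tm_one_right: "tm (R u) (R 1) = R u"
proof (intro ext antisym)
  fix i k
  show "tm (R u) (R 1) i k \<le> R u i k" using tm_le[of "R u" "R 1" i k k] by (simp add: R_one)
  obtain j where "tm (R u) (R 1) i k = R u i j + R 1 j k" using tm_ex by blast
  then show "R u i k \<le> tm (R u) (R 1) i k" using Rk_le[of u i k j] by (simp add: R_one)
qed

lemma R_inj: assumes "R u = R w" shows "u = w"
proof (rule perm_eqI)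
  fix a
  have A: "\<And>x k. k \<le> x $$ a \<longleftrightarrow> R x (Suc a) k = Suc (R x a k)" by (simp add: R_Suc)
  have "R w (Suc a) (u $$ a) = Suc (R w a (u $$ a))" using A[of "u $$ a" u] assms by simp
  then have "u $$ a \<le> w $$ a" using A by blast
  moreover have "R u (Suc a) (w $$ a) = Suc (R u a (w $$ a))" using A[of "w $$ a" w] assms by simp
  then have "w $$ a \<le> u $$ a" using A by blast
  ultimately show "u $$ a = w $$ a" by simp
qed

lemma R_mono_tm_left: "R v i k \<le> tm (R v) (R u) i k"
proof -
  obtain j where "tm (R v) (R u) i k = R v i j + R u j k" using tm_ex by blast
  then show ?thesis using Rk_le[of v i k j] R_lower[of j k u] by simp
qed

lemma R_mono_tm_right: "R u i k \<le> tm (R v) (R u) i k"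
proof -
  obtain j where "tm (R v) (R u) i k = R v i j + R u j k" using tm_ex by blast
  then show ?thesis using Ri_le[of u i k j] R_lower[of i j v] by simp
qed



lemma R_sgen: "R (sgen i) a j = (a - j) + (if a = Suc i \<and> j = Suc i then 1 else 0)"
  by (induction a) (auto simp: R_0 R_Suc sgen_apply transpose_def)

lemma R_us: "R (u * sgen i) a k = (if a = Suc i then R u i k + (if k \<le> u $$ (Suc i) then 1 else 0) else R u a k)"
proof (induction a)
  case 0 then show ?case by (simp add: R_0)
next
  case (Suc a)
  show ?case
  proof (cases "a = Suc i")
    case True
    then show ?thesis using Suc by (simp add: R_Suc apply_times sgen_apply)
  next
    case False
    then show ?thesis using Suc by (auto simp: R_Suc apply_times sgen_apply transpose_def)
  qed
qed

lemma tm_sgen_other: "a \<noteq> Suc i \<Longrightarrow> tm (R (sgen i)) (R u) a k = R u a k"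
  using tm_le[of "R (sgen i)" "R u" a k a] R_mono_tm_right[of u a k "sgen i"]
  by (simp add: R_sgen)

lemma tm_sgen_at: "tm (R (sgen i)) (R u) (Suc i) k = min (Suc (R u i k)) (R u (Suc (Suc i)) k)"
proof (rule antisym)
  have "tm (R (sgen i)) (R u) (Suc i) k \<le> Suc (R u i k)"
    using tm_le[of "R (sgen i)" "R u" "Suc i" k i] by (simp add: R_sgen)
  moreover have "tm (R (sgen i)) (R u) (Suc i) k \<le> R u (Suc (Suc i)) k"
    using tm_le[of "R (sgen i)" "R u" "Suc i" k "Suc (Suc i)"] by (simp add: R_sgen)
  ultimately show "tm (R (sgen i)) (R u) (Suc i) k \<le> min (Suc (R u i k)) (R u (Suc (Suc i)) k)" by simp
next
  obtain j where j: "tm (R (sgen i)) (R u) (Suc i) k = R (sgen i) (Suc i) j + R u j k" using tm_ex by blast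
  consider "j = Suc i" | "j \<le> i" | "Suc (Suc i) \<le> j" by linarith
  then show "min (Suc (R u i k)) (R u (Suc (Suc i)) k) \<le> tm (R (sgen i)) (R u) (Suc i) k"
  proof cases
    case 1 then show ?thesis using j R_mono_i[of i "Suc i" u k] by (simp add: R_sgen)
  next
    case 2 then show ?thesis using j Ri_le[of u i k j] by (simp add: R_sgen)
  next
    case 3 then show ?thesis using j R_mono_i[of "Suc (Suc i)" j u k] by (simp add: R_sgen)
  qed
qed

lemma R_hgen: "R (hgen u i) = tm (R (sgen i)) (R u)"
proof (intro ext)
  fix a k
  show "R (hgen u i) a k = tm (R (sgen i)) (R u) a k"
  proof (cases "a = Suc i")
    case False
    then show ?thesis by (simp add: tm_sgen_other hgen_def R_us)
  next
    case True
    have ne: "u $$ i \<noteq> u $$ (Suc i)" by (simp add: apply_inj)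
    show ?thesis using True ne
      by (auto simp: tm_sgen_at hgen_def hgen_iff R_us R_Suc apply_times sgen_apply)
  qed
qed

lemma word_prod_Nil: "word_prod [] = 1" by (simp add: word_prod_def)

lemma len_word_prod_le: "len (word_prod is) \<le> length is"
proof (induction "is" rule: rev_induct)
  case Nil then show ?case by (simp add: word_prod_Nil len_one)
next
  case (snoc i js) then show ?case using len_swap_le[of "word_prod js" i] by (simp add: word_prod_snoc)
qed

lemma fold_R: "length is = len (word_prod is) \<Longrightarrow> R (foldl hgen u is) = tm (R (word_prod is)) (R u)"
proof (induction "is" rule: rev_induct)
  case Nil then show ?case by (simp add: word_prod_Nil tm_one_left)
next
  case (snoc i js)
  define x where "x = word_prod js"
  have a: "Suc (length js) = len (x * sgen i)" using snoc.prems by (simp add: word_prod_snoc x_def)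
  have "len x \<le> length js" unfolding x_def by (rule len_word_prod_le)
  moreover have "len (x * sgen i) \<le> Suc (len x)" by (rule len_swap_le)
  ultimately have lx: "length js = len x" and lt: "len x < len (x * sgen i)" using a by linarith+
  have h: "hgen x i = x * sgen i" using lt by (simp add: hgen_def)
  have IH: "R (foldl hgen u js) = tm (R x) (R u)" using snoc.IH lx x_def by simp
  have "R (foldl hgen u (js @ [i])) = tm (R (sgen i)) (tm (R x) (R u))" by (simp add: R_hgen IH)
  also have "\<dots> = tm (tm (R (sgen i)) (R x)) (R u)" by (simp add: tm_assoc)
  also have "\<dots> = tm (R (x * sgen i)) (R u)" by (simp add: R_hgen[symmetric] h)
  finally show ?case by (simp add: word_prod_snoc x_def)
qed

lemma R_hprod: "R (hprod u v) = tm (R v) (R u)"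
proof -
  have "reduced_word (SOME is. reduced_word is v) v" using reduced_exists by (rule someI_ex)
  then show ?thesis unfolding hprod_def reduced_word_def using fold_R by metis
qed

lemma hprod_assoc: "hprod (hprod u v) y = hprod u (hprod v y)"
  by (rule R_inj) (simp add: R_hprod tm_assoc)

lemma hprod_one_left: "hprod 1 v = v"
  by (rule R_inj) (simp add: R_hprod tm_one_right)

lemma hprod_one_right: "hprod u 1 = u"
  by (rule R_inj) (simp add: R_hprod tm_one_left)

lemma len_foldl: "len (foldl hgen u is) \<le> len u + length is"
proof (induction "is" arbitrary: u)
  case Nil then show ?case by simp
next
  case (Cons i js)
  have "len (hgen u i) \<le> Suc (len u)" using len_swap_le[of u i] by (simp add: hgen_def)
  then show ?case using Cons[of "hgen u i"] by simp
qed

lemma len_hprod: "len (hprod u v) \<le> len u + len v"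
proof -
  have "reduced_word (SOME is. reduced_word is v) v" using reduced_exists by (rule someI_ex)
  then show ?thesis unfolding hprod_def reduced_word_def using len_foldl by metis
qed

lemma R_le_hprod_right: "R v i k \<le> R (hprod u v) i k"
  by (simp add: R_hprod R_mono_tm_left)

lemma R_le_hprod_left: "R u i k \<le> R (hprod u v) i k"
  by (simp add: R_hprod R_mono_tm_right)

lemma finite_fixed: "finite {v :: sinf. \<forall>a\<ge>N. v $$ a = a}"
proof -
  let ?S = "{v :: sinf. \<forall>a\<ge>N. v $$ a = a}"
  let ?f = "\<lambda>v :: sinf. restrict (Perm.apply v) {..<N}"
  have "inj_on ?f ?S"
  proof (rule inj_onI)
    fix v w assume v: "v \<in> ?S" and w: "w \<in> ?S" and e: "?f v = ?f w"
    show "v = w"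
    proof (rule perm_eqI)
      fix a show "v $$ a = w $$ a"
      proof (cases "a < N")
        case True then show ?thesis using fun_cong[OF e, of a] by simp
      next
        case False then show ?thesis using v w by simp
      qed
    qed
  qed
  moreover have "?f ` ?S \<subseteq> {..<N} \<rightarrow>\<^sub>E {..<N}"
  proof (rule image_subsetI)
    fix v assume "v \<in> ?S"
    then show "?f v \<in> {..<N} \<rightarrow>\<^sub>E {..<N}" using perm_bound_lt[of N v] by (simp add: restrict_PiE_iff)
  qed
  moreover have "finite ({..<N} \<rightarrow>\<^sub>E {..<N::nat})" by (simp add: finite_PiE)
  ultimately show ?thesis by (meson finite_imageD finite_subset)
qed

lemma finite_below: "finite {v. \<forall>i k. R v i k \<le> R w i k}"
proof -
  obtain N where N: "\<forall>a\<ge>N. w $$ a = a" using perm_bound by blast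
  have Rw0: "R w k k = 0" if "N \<le> k" for k
  proof -
    have "\<forall>a. \<not> (a < k \<and> k \<le> w $$ a)"
    proof (intro allI notI)
      fix a assume "a < k \<and> k \<le> w $$ a"
      then have "a < k" "k \<le> w $$ a" by auto
      show False
      proof (cases "a < N")
        case True then show False using perm_bound_lt[OF N True] \<open>k \<le> w $$ a\<close> that by linarith
      next
        case False then show False using N \<open>a < k\<close> \<open>k \<le> w $$ a\<close> by simp
      qed
    qed
    then show ?thesis unfolding R_def by simp
  qed
  have "{v. \<forall>i k. R v i k \<le> R w i k} \<subseteq> {v. \<forall>a\<ge>N. v $$ a = a}"
  proof safe
    fix v a assume v: "\<forall>i k. R v i k \<le> R w i k" and a: "N \<le> a"
    have cl: "\<forall>b<k. v $$ b < k" if "N \<le> k" for k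
    proof -
      have "R v k k = 0" using v Rw0[OF that] by (metis le_zero_eq)
      then have "{b. b < k \<and> k \<le> v $$ b} = {}" unfolding R_def by simp
      then show ?thesis by auto
    qed
    have sub: "Perm.apply v ` {..<a} \<subseteq> {..<a}" using cl[OF a] by auto
    have injv: "inj_on (Perm.apply v) {..<a}" by (simp add: apply_inj inj_on_def)
    have eq: "Perm.apply v ` {..<a} = {..<a}"
      using sub by (rule card_subset_eq[rotated]) (simp_all add: card_image[OF injv])
    have "v $$ a < Suc a" using cl[of "Suc a"] a by simp
    moreover have "\<not> v $$ a < a"
    proof
      assume "v $$ a < a"
      then have "v $$ a \<in> Perm.apply v ` {..<a}" using eq by simp
      then obtain b where "b < a" "v $$ a = v $$ b" by auto
      then show False by (simp add: apply_inj)
    qed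
    ultimately show "v $$ a = a" by simp
  qed
  then show ?thesis using finite_fixed finite_subset by blast
qed



definition hS :: "sinf \<Rightarrow> (sinf \<times> sinf) set" where
  "hS w = {(u, v). hprod u v = w}"

lemma rmul_alt: "rmul f g w = (\<Sum>p\<in>hS w. (-1) ^ (len (fst p) + len (snd p) - len w) * f (fst p) * g (snd p))"
  unfolding rmul_def hS_def by (simp add: case_prod_beta)

lemma finite_hS: "finite (hS w)"
proof -
  have "hS w \<subseteq> {v. \<forall>i k. R v i k \<le> R w i k} \<times> {v. \<forall>i k. R v i k \<le> R w i k}"
    unfolding hS_def using R_le_hprod_left R_le_hprod_right by blast
  then show ?thesis using finite_below by (meson finite_SigmaI finite_subset)
qed

lemma rmul_runit_right: "rmul f runit = f"
proof
  fix w
  have "rmul f runit w = (\<Sum>p\<in>hS w. if p = (w, 1) then f w else 0)"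
    unfolding rmul_alt
  proof (rule sum.cong)
    fix p assume p: "p \<in> hS w"
    show "(-1) ^ (len (fst p) + len (snd p) - len w) * f (fst p) * runit (snd p) = (if p = (w, 1) then f w else 0)"
    proof (cases "snd p = 1")
      case True
      then have "fst p = w" using p hprod_one_right by (auto simp: hS_def)
      then have "p = (w, 1)" using True by (metis prod.collapse)
      then show ?thesis by (simp add: runit_def len_one)
    next
      case False then show ?thesis by (auto simp: runit_def)
    qed
  qed simp
  also have "\<dots> = f w" using finite_hS by (simp add: hS_def hprod_one_right)
  finally show "rmul f runit w = f w" .
qed

lemma rmul_runit_left: "rmul runit f = f"
proof
  fix w
  have "rmul runit f w = (\<Sum>p\<in>hS w. if p = (1, w) then f w else 0)"
    unfolding rmul_alt
  proof (rule sum.cong)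
    fix p assume p: "p \<in> hS w"
    show "(-1) ^ (len (fst p) + len (snd p) - len w) * runit (fst p) * f (snd p) = (if p = (1, w) then f w else 0)"
    proof (cases "fst p = 1")
      case True
      then have "snd p = w" using p hprod_one_left by (auto simp: hS_def)
      then have "p = (1, w)" using True by (metis prod.collapse)
      then show ?thesis by (simp add: runit_def len_one)
    next
      case False then show ?thesis by (auto simp: runit_def)
    qed
  qed simp
  also have "\<dots> = f w" using finite_hS by (simp add: hS_def hprod_one_left)
  finally show "rmul runit f w = f w" .
qed

lemma rmul_diff: "rmul f (\<lambda>x. g x - h x) w = rmul f g w - rmul f h w"
  unfolding rmul_alt by (simp add: sum_subtractf algebra_simps)

definition G3 :: "(sinf \<Rightarrow> 'r::comm_ring_1) \<Rightarrow> (sinf \<Rightarrow> 'r) \<Rightarrow> (sinf \<Rightarrow> 'r) \<Rightarrow> sinf \<Rightarrow> sinf \<times> sinf \<times> sinf \<Rightarrow> 'r" where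
  "G3 a b c w t = (-1) ^ (len (fst t) + len (fst (snd t)) + len (snd (snd t)) - len w) * a (fst t) * b (fst (snd t)) * c (snd (snd t))"

lemma rmul_assoc_left:
  "rmul (rmul a b) c w = (\<Sum>t\<in>{t. hprod (hprod (fst t) (fst (snd t))) (snd (snd t)) = w}. G3 a b c w t)"
proof -
  have "rmul (rmul a b) c w = (\<Sum>p\<in>hS w. \<Sum>q\<in>hS (fst p). G3 a b c w (fst q, snd q, snd p))"
    unfolding rmul_alt[of "rmul a b"]
  proof (rule sum.cong[OF refl])
    fix p assume p: "p \<in> hS w"
    have lw: "len w \<le> len (fst p) + len (snd p)" using p len_hprod by (auto simp: hS_def)
    show "(-1) ^ (len (fst p) + len (snd p) - len w) * rmul a b (fst p) * c (snd p) =
          (\<Sum>q\<in>hS (fst p). G3 a b c w (fst q, snd q, snd p))"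
      unfolding rmul_alt sum_distrib_left sum_distrib_right
    proof (rule sum.cong[OF refl])
      fix q assume q: "q \<in> hS (fst p)"
      have "hprod (fst q) (snd q) = fst p" using q by (auto simp: hS_def)
      then have lx: "len (fst p) \<le> len (fst q) + len (snd q)" using len_hprod[of "fst q" "snd q"] by simp
      have e: "len (fst q) + len (snd q) + len (snd p) - len w =
               (len (fst p) + len (snd p) - len w) + (len (fst q) + len (snd q) - len (fst p))"
        using lw lx by linarith
      show "(-1) ^ (len (fst p) + len (snd p) - len w) * ((-1) ^ (len (fst q) + len (snd q) - len (fst p)) * a (fst q) * b (snd q)) * c (snd p) =
            G3 a b c w (fst q, snd q, snd p)"
        unfolding G3_def fst_conv snd_conv e power_add by (simp add: algebra_simps)
    qed
  qed
  also have "\<dots> = (\<Sum>z\<in>Sigma (hS w) (\<lambda>p. hS (fst p)). G3 a b c w (fst (snd z), snd (snd z), snd (fst z)))"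
    by (rule sum.Sigma[unfolded split_def]) (simp_all add: finite_hS)
  also have "\<dots> = (\<Sum>t\<in>{t. hprod (hprod (fst t) (fst (snd t))) (snd (snd t)) = w}. G3 a b c w t)"
    by (rule sum.reindex_bij_witness[where i = "\<lambda>t. ((hprod (fst t) (fst (snd t)), snd (snd t)), (fst t, fst (snd t)))"
          and j = "\<lambda>z. (fst (snd z), snd (snd z), snd (fst z))"]) (auto simp: hS_def)
  finally show ?thesis .
qed

lemma rmul_assoc_right:
  "rmul a (rmul b c) w = (\<Sum>t\<in>{t. hprod (fst t) (hprod (fst (snd t)) (snd (snd t))) = w}. G3 a b c w t)"
proof -
  have "rmul a (rmul b c) w = (\<Sum>p\<in>hS w. \<Sum>q\<in>hS (snd p). G3 a b c w (fst p, fst q, snd q))"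
    unfolding rmul_alt[of a "rmul b c"]
  proof (rule sum.cong[OF refl])
    fix p assume p: "p \<in> hS w"
    have lw: "len w \<le> len (fst p) + len (snd p)" using p len_hprod by (auto simp: hS_def)
    show "(-1) ^ (len (fst p) + len (snd p) - len w) * a (fst p) * rmul b c (snd p) =
          (\<Sum>q\<in>hS (snd p). G3 a b c w (fst p, fst q, snd q))"
      unfolding rmul_alt sum_distrib_left sum_distrib_right
    proof (rule sum.cong[OF refl])
      fix q assume q: "q \<in> hS (snd p)"
      have "hprod (fst q) (snd q) = snd p" using q by (auto simp: hS_def)
      then have lx: "len (snd p) \<le> len (fst q) + len (snd q)" using len_hprod[of "fst q" "snd q"] by simp
      have e: "len (fst p) + len (fst q) + len (snd q) - len w =
               (len (fst p) + len (snd p) - len w) + (len (fst q) + len (snd q) - len (snd p))"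
        using lw lx by linarith
      show "(-1) ^ (len (fst p) + len (snd p) - len w) * a (fst p) * ((-1) ^ (len (fst q) + len (snd q) - len (snd p)) * b (fst q) * c (snd q)) =
            G3 a b c w (fst p, fst q, snd q)"
        unfolding G3_def fst_conv snd_conv e power_add by (simp add: algebra_simps)
    qed
  qed
  also have "\<dots> = (\<Sum>z\<in>Sigma (hS w) (\<lambda>p. hS (snd p)). G3 a b c w (fst (fst z), fst (snd z), snd (snd z)))"
    by (rule sum.Sigma[unfolded split_def]) (simp_all add: finite_hS)
  also have "\<dots> = (\<Sum>t\<in>{t. hprod (fst t) (hprod (fst (snd t)) (snd (snd t))) = w}. G3 a b c w t)"
    by (rule sum.reindex_bij_witness[where i = "\<lambda>t. ((fst t, hprod (fst (snd t)) (snd (snd t))), (fst (snd t), snd (snd t)))"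
          and j = "\<lambda>z. (fst (fst z), fst (snd z), snd (snd z))"]) (auto simp: hS_def)
  finally show ?thesis .
qed

lemma rmul_assoc: "rmul (rmul a b) c = rmul a (rmul b c)"
  by (rule ext) (simp add: rmul_assoc_left rmul_assoc_right hprod_assoc)



lemma below_strict:
  assumes "\<forall>i k. R v i k \<le> R w i k" "v \<noteq> w"
  shows "card {x. \<forall>i k. R x i k \<le> R v i k} < card {x. \<forall>i k. R x i k \<le> R w i k}"
proof (rule psubset_card_mono[OF finite_below])
  show "{x. \<forall>i k. R x i k \<le> R v i k} \<subset> {x. \<forall>i k. R x i k \<le> R w i k}"
  proof
    show "{x. \<forall>i k. R x i k \<le> R v i k} \<subseteq> {x. \<forall>i k. R x i k \<le> R w i k}"
      using assms(1) le_trans by blast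
    have "w \<notin> {x. \<forall>i k. R x i k \<le> R v i k}"
    proof
      assume "w \<in> {x. \<forall>i k. R x i k \<le> R v i k}"
      then have "R v = R w" using assms(1) by (auto intro!: ext antisym)
      then show False using R_inj assms(2) by blast
    qed
    moreover have "w \<in> {x. \<forall>i k. R x i k \<le> R w i k}" by simp
    ultimately show "{x. \<forall>i k. R x i k \<le> R v i k} \<noteq> {x. \<forall>i k. R x i k \<le> R w i k}" by blast
  qed
qed

lemma part_i:
  fixes f g :: "sinf \<Rightarrow> 'r::comm_ring_1"
  assumes nzd: "\<And>w. non_zero_divisor (\<Sum>u \<in> {u. hprod u w = w}. (-1) ^ len u * f u)"
    and fg: "rmul f g = f"
  shows "g = runit"
proof -
  define d where "d = (\<lambda>x. g x - runit x)"
  have rd: "rmul f d w = 0" for w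
    unfolding d_def rmul_diff using fg rmul_runit_right[of f] by simp
  have "d w = 0" for w
  proof (induction "card {x. \<forall>i k. R x i k \<le> R w i k}" arbitrary: w rule: less_induct)
    case less
    have z: "d v = 0" if "p \<in> hS w" "snd p = v" "v \<noteq> w" for p v
    proof -
      have "\<forall>i k. R v i k \<le> R w i k" using that R_le_hprod_right by (auto simp: hS_def)
      then show ?thesis using less below_strict that(3) by blast
    qed
    let ?c = "\<Sum>u \<in> {u. hprod u w = w}. (-1) ^ len u * f u"
    have "0 = rmul f d w" using rd by simp
    also have "\<dots> = (\<Sum>p\<in>hS w. if snd p = w then (-1) ^ len (fst p) * f (fst p) * d w else 0)"
      unfolding rmul_alt
    proof (rule sum.cong[OF refl])
      fix p assume "p \<in> hS w"
      then show "(-1) ^ (len (fst p) + len (snd p) - len w) * f (fst p) * d (snd p) =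
          (if snd p = w then (-1) ^ len (fst p) * f (fst p) * d w else 0)"
        using z by auto
    qed
    also have "\<dots> = (\<Sum>p\<in>{p\<in>hS w. snd p = w}. (-1) ^ len (fst p) * f (fst p) * d w)"
      by (simp add: sum.inter_filter finite_hS)
    also have "{p\<in>hS w. snd p = w} = (\<lambda>u. (u, w)) ` {u. hprod u w = w}"
      by (auto simp: hS_def)
    also have "(\<Sum>p\<in>(\<lambda>u. (u, w)) ` {u. hprod u w = w}. (-1) ^ len (fst p) * f (fst p) * d w)
        = (\<Sum>u\<in>{u. hprod u w = w}. (-1) ^ len u * f u * d w)"
      by (subst sum.reindex) (auto simp: inj_on_def)
    also have "\<dots> = ?c * d w" by (simp add: sum_distrib_right)
    finally have "?c * d w = 0" by simp
    then show "d w = 0" using nzd[of w] unfolding non_zero_divisor_def by blast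
  qed
  then show ?thesis unfolding d_def by (auto simp: fun_eq_iff)
qed

theorem lemma4p4:
  fixes f g h :: "sinf \<Rightarrow> 'r::comm_ring_1"
  assumes "\<And>w. non_zero_divisor (\<Sum>u \<in> {u. hprod u w = w}. (-1) ^ len u * f u)"
  shows "(rmul f g = f \<longrightarrow> g = runit) \<and> (rmul f h = runit \<longrightarrow> rmul h f = runit)"
proof (intro conjI impI)
  assume "rmul f g = f"
  then show "g = runit" using part_i assms by blast
next
  assume fh: "rmul f h = runit"
  have "rmul f (rmul h f) = rmul (rmul f h) f" by (simp add: rmul_assoc)
  also have "\<dots> = f" by (simp add: fh rmul_runit_left)
  finally show "rmul h f = runit" using part_i assms by blast
qed

end
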